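(* Let $G$ be a finite graph with $n$ vertices and let $I$ be a vertex of maximum degree in $\mathcal{I}^0_{\mathrm{AR}}(G)$ (this maximum degree equals $n$, so that the neighbours of $I$ are exactly the sets $I_x=I\triangle\{x\}$, $x\in V(G)$). Let $u,v$ be distinct vertices of $G$. Then $uv\notin E(G)$ if and only if $I_u$ and $I_v$ have a common neighbour $I'\neq I$ in $\mathcal{I}^0_{\mathrm{AR}}(G)$.
   Context: $\mathcal{I}^0_{\mathrm{AR}}(G)$ is the graph whose vertices are all independent sets of $G$ (including the empty set), two independent sets being adjacent iff their symmetric difference has exactly one element. $\triangle$ denotes symmetric difference. *)

theory Defs
  imports Main
begin

definition simple_graph :: "'a set \<Rightarrow> ('a \<Rightarrow> 'a \<Rightarrow> bool) \<Rightarrow> bool" where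
  "simple_graph V E \<longleftrightarrow> finite V \<and> (\<forall>x y. E x y \<longrightarrow> x \<in> V \<and> y \<in> V)
     \<and> (\<forall>x y. E x y \<longrightarrow> E y x) \<and> (\<forall>x. \<not> E x x)"

definition indep_set :: "'a set \<Rightarrow> ('a \<Rightarrow> 'a \<Rightarrow> bool) \<Rightarrow> 'a set \<Rightarrow> bool" where
  "indep_set V E S \<longleftrightarrow> S \<subseteq> V \<and> (\<forall>x\<in>S. \<forall>y\<in>S. \<not> E x y)"

definition ar_adj :: "'a set \<Rightarrow> 'a set \<Rightarrow> bool" where
  "ar_adj A B \<longleftrightarrow> card ((A - B) \<union> (B - A)) = 1"

definition ar_degree :: "'a set \<Rightarrow> ('a \<Rightarrow> 'a \<Rightarrow> bool) \<Rightarrow> 'a set \<Rightarrow> nat" where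
  "ar_degree V E I = card {J. indep_set V E J \<and> ar_adj I J}"

end

theory Submission
  imports Defs
begin

definition sdx :: "'a set \<Rightarrow> 'a \<Rightarrow> 'a set" where
  "sdx A x = (A - {x}) \<union> ({x} - A)"

lemma adj_iff: "ar_adj A B \<longleftrightarrow> (\<exists>x. B = sdx A x)"
proof
  assume "ar_adj A B"
  then obtain x where x: "(A - B) \<union> (B - A) = {x}"
    unfolding ar_adj_def by (auto simp: card_1_singleton_iff)
  have "B = sdx A x"
    unfolding sdx_def using x by blast
  then show "\<exists>x. B = sdx A x" by blast
next
  assume "\<exists>x. B = sdx A x"
  then obtain x where "B = sdx A x" by blast
  then have "(A - B) \<union> (B - A) = {x}" unfolding sdx_def by blast
  then show "ar_adj A B" unfolding ar_adj_def by simp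
qed

lemma sdx_inj: "inj_on (sdx J) S"
proof (rule inj_onI)
  fix x y assume "sdx J x = sdx J y"
  then have "(J - sdx J x) \<union> (sdx J x - J) = (J - sdx J y) \<union> (sdx J y - J)" by simp
  moreover have "\<And>z. (J - sdx J z) \<union> (sdx J z - J) = {z}" unfolding sdx_def by blast
  ultimately show "x = y" by simp
qed

lemma deg_eq:
  assumes "J \<subseteq> V"
  shows "ar_degree V E J = card {x\<in>V. indep_set V E (sdx J x)}"
proof -
  have "{K. indep_set V E K \<and> ar_adj J K} = sdx J ` {x\<in>V. indep_set V E (sdx J x)}"
  proof
    show "{K. indep_set V E K \<and> ar_adj J K} \<subseteq> sdx J ` {x\<in>V. indep_set V E (sdx J x)}"
    proof
      fix K assume "K \<in> {K. indep_set V E K \<and> ar_adj J K}"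
      then obtain x where K: "K = sdx J x" "indep_set V E K" by (auto simp: adj_iff)
      have "x \<in> V" using K assms unfolding sdx_def indep_set_def by blast
      then show "K \<in> sdx J ` {x\<in>V. indep_set V E (sdx J x)}" using K by blast
    qed
  next
    show "sdx J ` {x\<in>V. indep_set V E (sdx J x)} \<subseteq> {K. indep_set V E K \<and> ar_adj J K}"
      by (auto simp: adj_iff)
  qed
  then show ?thesis unfolding ar_degree_def using sdx_inj card_image by metis
qed

theorem lemma4p2:
  fixes V :: "'a set" and E :: "'a \<Rightarrow> 'a \<Rightarrow> bool" and I :: "'a set" and u v :: 'a
  assumes "simple_graph V E"
    and "indep_set V E I"
    and "\<forall>J. indep_set V E J \<longrightarrow> ar_degree V E J \<le> ar_degree V E I"
    and "u \<in> V" and "v \<in> V" and "u \<noteq> v"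
  shows "\<not> E u v \<longleftrightarrow>
    (\<exists>I'. indep_set V E I' \<and> I' \<noteq> I
        \<and> ar_adj I' ((I - {u}) \<union> ({u} - I)) \<and> ar_adj I' ((I - {v}) \<union> ({v} - I)))"
proof -
  have fin: "finite V" and noloop: "\<And>x. \<not> E x x"
    using assms(1) unfolding simple_graph_def by auto
  have IV: "I \<subseteq> V" using assms(2) unfolding indep_set_def by auto
  have e: "indep_set V E {}" unfolding indep_set_def by auto
  have "\<And>x. x \<in> V \<Longrightarrow> indep_set V E (sdx {} x)"
    unfolding indep_set_def sdx_def using noloop by simp
  then have "{x\<in>V. indep_set V E (sdx {} x)} = V" by blast
  then have "ar_degree V E {} = card V" using deg_eq[of "{}" V E] by simp
  moreover have "ar_degree V E {} \<le> ar_degree V E I" using assms(3) e by blast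
  ultimately have "card V \<le> card {x\<in>V. indep_set V E (sdx I x)}"
    using deg_eq[OF IV, of E] by simp
  moreover have "{x\<in>V. indep_set V E (sdx I x)} \<subseteq> V" by blast
  ultimately have "{x\<in>V. indep_set V E (sdx I x)} = V"
    using fin card_seteq by blast
  then have H: "\<And>x. x \<in> V \<Longrightarrow> indep_set V E (sdx I x)" by blast
  have Hu: "indep_set V E (sdx I u)" and Hv: "indep_set V E (sdx I v)"
    using H assms(4,5) by auto
  let ?P = "sdx (sdx I u) v"
  show ?thesis unfolding sdx_def[symmetric]
  proof
    assume ne: "\<not> E u v"
    have sym: "\<And>x y. E x y \<Longrightarrow> E y x" using assms(1) unfolding simple_graph_def by blast
    have "?P \<subseteq> V" using IV assms(4,5) unfolding sdx_def by blast
    moreover have "\<forall>x\<in>?P. \<forall>y\<in>?P. \<not> E x y"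
    proof (intro ballI)
      fix x y assume x: "x \<in> ?P" and y: "y \<in> ?P"
      have "?P \<subseteq> I \<union> {u, v}" unfolding sdx_def by blast
      show "\<not> E x y"
      proof (cases "{x,y} \<subseteq> sdx I u \<or> {x,y} \<subseteq> sdx I v")
        case True then show ?thesis using Hu Hv unfolding indep_set_def by blast
      next
        case False
        then have "(x = u \<and> y = v) \<or> (x = v \<and> y = u)"
          using x y assms(6) unfolding sdx_def by blast
        then show ?thesis using ne sym by blast
      qed
    qed
    ultimately have "indep_set V E ?P" unfolding indep_set_def by blast
    moreover have "?P \<noteq> I" using assms(6) unfolding sdx_def by blast
    moreover have "sdx I u = sdx ?P v" unfolding sdx_def using assms(6) by blast
    moreover have "sdx I v = sdx ?P u" unfolding sdx_def using assms(6) by blast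
    ultimately show "\<exists>I'. indep_set V E I' \<and> I' \<noteq> I \<and> ar_adj I' (sdx I u) \<and> ar_adj I' (sdx I v)"
      unfolding adj_iff by blast
  next
    assume "\<exists>I'. indep_set V E I' \<and> I' \<noteq> I \<and> ar_adj I' (sdx I u) \<and> ar_adj I' (sdx I v)"
    then obtain I' a b where I': "indep_set V E I'" "I' \<noteq> I" "sdx I u = sdx I' a" "sdx I v = sdx I' b"
      unfolding adj_iff by blast
    have "I' = ?P"
    proof -
      have a: "I' = sdx (sdx I u) a" using I'(3) unfolding sdx_def by blast
      have b: "I' = sdx (sdx I v) b" using I'(4) unfolding sdx_def by blast
      have "a \<noteq> u" using a I'(2) unfolding sdx_def by blast
      have "b \<noteq> v" using b I'(2) unfolding sdx_def by blast
      have v1: "v \<in> I' \<longleftrightarrow> v \<notin> I" using b \<open>b \<noteq> v\<close> unfolding sdx_def by auto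
      have v2: "v \<in> I' \<longleftrightarrow> ((v \<in> I) \<noteq> (v = a))" using a assms(6) unfolding sdx_def by auto
      have "a = v" using v1 v2 by blast
      then show ?thesis using a by simp
    qed
    show "\<not> E u v"
    proof (cases "u \<in> I")
      case True
      show ?thesis
      proof (cases "v \<in> I")
        case True
        then show ?thesis using \<open>u \<in> I\<close> assms(2) unfolding indep_set_def by blast
      next
        case False
        then have "u \<in> sdx I v" "v \<in> sdx I v" using \<open>u \<in> I\<close> assms(6) unfolding sdx_def by auto
        then show ?thesis using Hv unfolding indep_set_def by blast
      qed
    next
      case False
      show ?thesis
      proof (cases "v \<in> I")
        case True
        then have "u \<in> sdx I u" "v \<in> sdx I u" using \<open>u \<notin> I\<close> assms(6) unfolding sdx_def by auto
        then show ?thesis using Hu unfolding indep_set_def by blast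
      next
        case False
        then have "u \<in> ?P" "v \<in> ?P" using \<open>u \<notin> I\<close> assms(6) unfolding sdx_def by auto
        then show ?thesis using I'(1) \<open>I' = ?P\<close> unfolding indep_set_def by blast
      qed
    qed
  qed
qed

end
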